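(* Let $0<3x_0<L$, $\mu>0$, and $\mu_0=-\frac{x_0}{L+x_0}+2\sqrt{\frac{x_0}{L+x_0}}$. Consider $$(r\ddot u)''+\mu(q\dot u)'+pu=0\quad\text{on }(0,2L).\qquad(\ast)$$ (i) If $\mu<\mu_0$, every solution of $(\ast)$ is a linear combination of $\cos\alpha\theta\sinh\beta\theta$, $\sin\alpha\theta\cosh\beta\theta$, $\sin\alpha\theta\sinh\beta\theta$, $\cos\alpha\theta\cosh\beta\theta$, where $\alpha=\frac12\sqrt{\mu+\frac{x_0}{L+x_0}+2\sqrt{\frac{x_0}{L+x_0}}}$ and $\beta=\frac12\sqrt{-\mu-\frac{x_0}{L+x_0}+2\sqrt{\frac{x_0}{L+x_0}}}$. (ii) If $\mu=\mu_0$, every solution of $(\ast)$ is a linear combination of $\sin\alpha\theta$, $\cos\alpha\theta$, $\theta\sin\alpha\theta$, $\theta\cos\alpha\theta$ (with $\alpha$ as in (i)). (iii) If $\mu>\mu_0$, every solution of $(\ast)$ is a linear combination of $\sin(\alpha-\gamma)\theta$, $\sin(\alpha+\gamma)\theta$, $\cos(\alpha-\gamma)\theta$, $\cos(\alpha+\gamma)\theta$, with $\alpha$ as in (i) and $\gamma=\frac12\sqrt{\mu+\frac{x_0}{L+x_0}-2\sqrt{\frac{x_0}{L+x_0}}}$. In each case the four functions are linearly independent.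
   Context: $\sigma=\pi\sqrt{x_0/(L+x_0)}$, $k=L/\sin\sigma$, $\lambda=\frac{2L}{L+x_0}$, $H(s)=\frac{\pi}{\sigma\sqrt{k^2-(s-L)^2}}$ for $s\in[0,2L]$ (the curvature of the critical curve $\gamma(x_0,L)$), $\theta(s)=\int_0^sH(l)\,dl=\pi\big(1+\frac1\sigma\arcsin\frac{s-L}{k}\big)$, so $\theta(0)=0$, $\theta(2L)=2\pi$. Set $r=2/H^3$, $q=2/H$, $p=(2-\lambda)H$. Derivatives ($'$ and dots) are with respect to $s$; solutions are classical ($C^4$) solutions on $(0,2L)$. *)

theory Defs
  imports "HOL-Analysis.Analysis"
begin

definition sig :: "real \<Rightarrow> real \<Rightarrow> real" where
  "sig x0 L = pi * sqrt (x0 / (L + x0))"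

definition kk :: "real \<Rightarrow> real \<Rightarrow> real" where
  "kk x0 L = L / sin (sig x0 L)"

definition lam :: "real \<Rightarrow> real \<Rightarrow> real" where
  "lam x0 L = 2 * L / (L + x0)"

definition H :: "real \<Rightarrow> real \<Rightarrow> real \<Rightarrow> real" where
  "H x0 L s = pi / (sig x0 L * sqrt ((kk x0 L)^2 - (s - L)^2))"

text \<open>theta(s) = integral of H from 0 to s, in the closed form given in the paper.\<close>
definition theta :: "real \<Rightarrow> real \<Rightarrow> real \<Rightarrow> real" where
  "theta x0 L s = pi * (1 + arcsin ((s - L) / kk x0 L) / sig x0 L)"

definition rr :: "real \<Rightarrow> real \<Rightarrow> real \<Rightarrow> real" where
  "rr x0 L s = 2 / (H x0 L s)^3"

definition qq :: "real \<Rightarrow> real \<Rightarrow> real \<Rightarrow> real" where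
  "qq x0 L s = 2 / H x0 L s"

definition pp :: "real \<Rightarrow> real \<Rightarrow> real \<Rightarrow> real" where
  "pp x0 L s = (2 - lam x0 L) * H x0 L s"

definition mu0 :: "real \<Rightarrow> real \<Rightarrow> real" where
  "mu0 x0 L = - (x0 / (L + x0)) + 2 * sqrt (x0 / (L + x0))"

definition C4_on :: "real \<Rightarrow> real \<Rightarrow> (real \<Rightarrow> real) \<Rightarrow> bool" where
  "C4_on a b u \<longleftrightarrow>
     (\<forall>n<4. \<forall>s\<in>{a<..<b}. ((deriv ^^ n) u has_real_derivative (deriv ^^ Suc n) u s) (at s))
     \<and> continuous_on {a<..<b} ((deriv ^^ 4) u)"

definition is_solution :: "real \<Rightarrow> real \<Rightarrow> real \<Rightarrow> (real \<Rightarrow> real) \<Rightarrow> bool" where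
  "is_solution x0 L mu u \<longleftrightarrow> C4_on 0 (2*L) u \<and>
     (\<forall>s\<in>{0<..<2*L}.
        deriv (deriv (\<lambda>t. rr x0 L t * deriv (deriv u) t)) s
        + mu * deriv (\<lambda>t. qq x0 L t * deriv u t) s
        + pp x0 L s * u s = 0)"

definition general_solution_basis ::
  "real \<Rightarrow> real \<Rightarrow> real \<Rightarrow> (real \<Rightarrow> real) \<Rightarrow> (real \<Rightarrow> real) \<Rightarrow> (real \<Rightarrow> real) \<Rightarrow> (real \<Rightarrow> real) \<Rightarrow> bool"
where
  "general_solution_basis x0 L mu f1 f2 f3 f4 \<longleftrightarrow>
     (\<forall>u. is_solution x0 L mu u \<longrightarrow>
        (\<exists>c1 c2 c3 c4. \<forall>s\<in>{0<..<2*L}.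
           u s = c1 * f1 (theta x0 L s) + c2 * f2 (theta x0 L s)
               + c3 * f3 (theta x0 L s) + c4 * f4 (theta x0 L s)))
     \<and> (\<forall>c1 c2 c3 c4. (\<forall>s\<in>{0<..<2*L}.
           c1 * f1 (theta x0 L s) + c2 * f2 (theta x0 L s)
           + c3 * f3 (theta x0 L s) + c4 * f4 (theta x0 L s) = 0)
         \<longrightarrow> c1 = 0 \<and> c2 = 0 \<and> c3 = 0 \<and> c4 = 0)"

end

theory Submission
  imports Defs
begin



lemma prod_bound: "x * y \<le> (x^2 + y^2)/2" "- (x * y) \<le> (x^2 + y^2)/2" for x y :: real
proof -
  have "0 \<le> (x - y)^2" "0 \<le> (x + y)^2" by auto
  thus "x * y \<le> (x^2 + y^2)/2" "- (x * y) \<le> (x^2 + y^2)/2" by (auto simp: power2_eq_square algebra_simps)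
qed

lemma abs_prod_bound: "\<bar>x * y\<bar> \<le> (x^2 + y^2)/2" for x y :: real
  using prod_bound[of x y] by (auto simp: abs_if)

lemma lin_aux: fixes a0 a1 a2 a3 b0 b1 b2 b3 y0 y1 y2 y3 :: real shows "\<lbrakk>0 \<le> a0; 0 \<le> a1; 0 \<le> b1; 0 \<le> b2; 0 \<le> a2;
      0 \<le> a3; 0 \<le> b0; 0 \<le> b3; 0 \<le> y0; 0 \<le> y1; 0 \<le> y2; 0 \<le> y3\<rbrakk>
     \<Longrightarrow> (y0 + y1) / 2 +
        ((y1 + y2) / 2 +
         ((y2 + y3) / 2 +
          ((a2 + a3) / 2 + (b0 + b3) / 2)))
        \<le> (a0 + (b0 + 3 * y0)) / 2 +
          ((a1 + (b1 + 3 * y1)) / 2 +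
           (a2 +
            (a3 + (b2 + (b3 + (3 * y2 + 3 * y3))))) /
           2)"
  by (simp add: field_simps)

lemma energy_bound:
  fixes z0 z1 z2 z3 A B h :: real
  assumes "A \<ge> 0" "B \<ge> 0" "h \<ge> 0"
  defines "E \<equiv> z0^2 + z1^2 + z2^2 + z3^2"
  defines "D \<equiv> 2*(z0*(h*z1) + z1*(h*z2) + z2*(h*z3) + z3*(h*(-A*z2 - B*z0)))"
  shows "\<bar>D\<bar> \<le> (3 + A + B) * h * E"
proof -
  define P where "P = z0*z1 + z1*z2 + z2*z3 - A*(z3*z2) - B*(z3*z0)"
  have D: "D = 2*h*P" unfolding D_def P_def by (simp add: algebra_simps)
  have b1: "\<bar>A*(z3*z2)\<bar> \<le> A*((z3^2+z2^2)/2)"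
    using mult_left_mono[OF abs_prod_bound[of z3 z2] assms(1)] assms(1) by (simp add: abs_mult)
  have b2: "\<bar>B*(z3*z0)\<bar> \<le> B*((z3^2+z0^2)/2)"
    using mult_left_mono[OF abs_prod_bound[of z3 z0] assms(2)] assms(2) by (simp add: abs_mult)
  have "\<bar>P\<bar> \<le> (z0^2+z1^2)/2 + (z1^2+z2^2)/2 + (z2^2+z3^2)/2 + A*((z3^2+z2^2)/2) + B*((z3^2+z0^2)/2)"
  proof -
    have "\<bar>P\<bar> \<le> \<bar>z0*z1\<bar> + \<bar>z1*z2\<bar> + \<bar>z2*z3\<bar> + \<bar>A*(z3*z2)\<bar> + \<bar>B*(z3*z0)\<bar>"
      unfolding P_def by linarith
    thus ?thesis using abs_prod_bound[of z0 z1] abs_prod_bound[of z1 z2] abs_prod_bound[of z2 z3] b1 b2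
      by linarith
  qed
  also have "\<dots> \<le> (3 + A + B) / 2 * E"
  proof -
    have "0 \<le> z0^2" "0 \<le> z1^2" "0 \<le> z2^2" "0 \<le> z3^2" by auto
    hence "A * z0^2 \<ge> 0" "A * z1^2 \<ge> 0" "B*z1^2 \<ge> 0" "B*z2^2 \<ge> 0" using assms by auto
    thus ?thesis unfolding E_def using \<open>0 \<le> z0^2\<close> \<open>0 \<le> z1^2\<close> \<open>0 \<le> z2^2\<close> \<open>0 \<le> z3^2\<close>
      using mult_nonneg_nonneg[OF assms(1), of "z2^2"] mult_nonneg_nonneg[OF assms(1), of "z3^2"]
        mult_nonneg_nonneg[OF assms(2), of "z0^2"] mult_nonneg_nonneg[OF assms(2), of "z3^2"]
      by (simp add: algebra_simps lin_aux)
  qed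
  finally have "\<bar>P\<bar> \<le> (3 + A + B) / 2 * E" .
  hence "2*h*\<bar>P\<bar> \<le> 2*h*((3 + A + B) / 2 * E)" using assms(3) by (intro mult_left_mono) auto
  thus ?thesis unfolding D using assms(3) by (simp add: abs_mult algebra_simps)
qed

lemma energy_zero:
  fixes Z :: "nat \<Rightarrow> real \<Rightarrow> real" and h Th :: "real \<Rightarrow> real"
  assumes pz: "lo < pz" "pz < hi"
    and dZ: "\<And>s j. s \<in> {lo<..<hi} \<Longrightarrow> j < 3 \<Longrightarrow> (Z j has_real_derivative h s * Z (Suc j) s) (at s)"
    and dZ3: "\<And>s. s \<in> {lo<..<hi} \<Longrightarrow> (Z 3 has_real_derivative h s * (- A * Z 2 s - B * Z 0 s)) (at s)"
    and dTh: "\<And>s. s \<in> {lo<..<hi} \<Longrightarrow> (Th has_real_derivative h s) (at s)"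
    and hnn: "\<And>s. s \<in> {lo<..<hi} \<Longrightarrow> 0 \<le> h s"
    and AB: "A \<ge> 0" "B \<ge> 0"
    and z0: "\<And>j. j < 4 \<Longrightarrow> Z j pz = 0"
    and s: "s \<in> {lo<..<hi}" and j: "j < 4"
  shows "Z j s = 0"
proof -
  define E where "E s = (Z 0 s)^2 + (Z 1 s)^2 + (Z 2 s)^2 + (Z 3 s)^2" for s
  define D where "D s = 2*(Z 0 s*(h s*Z 1 s) + Z 1 s*(h s*Z 2 s) + Z 2 s*(h s*Z 3 s)
      + Z 3 s*(h s*(-A*Z 2 s - B*Z 0 s)))" for s
  define M where "M = 3 + A + B"
  have dE: "(E has_real_derivative D t) (at t)" if t: "t \<in> {lo<..<hi}" for t
  proof -
    have "(Z 0 has_real_derivative h t * Z 1 t) (at t)" "(Z 1 has_real_derivative h t * Z 2 t) (at t)"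
      "(Z 2 has_real_derivative h t * Z 3 t) (at t)" using dZ[OF t, of 0] dZ[OF t, of 1] dZ[OF t, of 2]
      by (auto simp: numeral_2_eq_2 numeral_3_eq_3)
    note d = this dZ3[OF t]
    show ?thesis unfolding E_def[abs_def] D_def using d
      by (auto intro!: derivative_eq_intros simp: algebra_simps)
  qed
  have Ebd: "\<bar>D t\<bar> \<le> M * h t * E t" if t: "t \<in> {lo<..<hi}" for t
    unfolding D_def E_def M_def by (rule energy_bound[OF AB hnn[OF t]])
  have Enn: "E t \<ge> 0" for t unfolding E_def by auto
  have E0: "E pz = 0" unfolding E_def using z0 by auto
  have "E s = 0"
  proof (cases "pz \<le> s")
    case True
    define F where "F t = E t * exp (- M * Th t)" for t
    have "F pz \<ge> F s"
    proof (rule DERIV_nonpos_imp_nonincreasing[OF True])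
      fix x assume x: "pz \<le> x" "x \<le> s"
      hence xi: "x \<in> {lo<..<hi}" using s pz by auto
      have "(F has_real_derivative (D x - M * h x * E x) * exp (- M * Th x)) (at x)"
        unfolding F_def by (rule derivative_eq_intros dE[OF xi] dTh[OF xi] refl | simp)+
          (simp add: algebra_simps)
      moreover have "(D x - M * h x * E x) * exp (- M * Th x) \<le> 0"
        using Ebd[OF xi] by (intro mult_nonpos_nonneg) auto
      ultimately show "\<exists>y. (F has_real_derivative y) (at x) \<and> y \<le> 0" by blast
    qed
    hence "F s \<le> 0" using E0 unfolding F_def by simp
    moreover have "F s \<ge> 0" unfolding F_def using Enn by auto
    ultimately show ?thesis unfolding F_def by simp
  next
    case False
    hence le: "s \<le> pz" by simp
    define F where "F t = E t * exp (M * Th t)" for t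
    have "F s \<le> F pz"
    proof (rule DERIV_nonneg_imp_nondecreasing[OF le])
      fix x assume x: "s \<le> x" "x \<le> pz"
      hence xi: "x \<in> {lo<..<hi}" using s pz by auto
      have "(F has_real_derivative (D x + M * h x * E x) * exp (M * Th x)) (at x)"
        unfolding F_def by (rule derivative_eq_intros dE[OF xi] dTh[OF xi] refl | simp)+
          (simp add: algebra_simps)
      moreover have "(D x + M * h x * E x) * exp (M * Th x) \<ge> 0"
        using Ebd[OF xi] by (intro mult_nonneg_nonneg) auto
      ultimately show "\<exists>y. (F has_real_derivative y) (at x) \<and> y \<ge> 0" by blast
    qed
    hence "F s \<le> 0" using E0 unfolding F_def by simp
    moreover have "F s \<ge> 0" unfolding F_def using Enn by auto
    ultimately show ?thesis unfolding F_def by simp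
  qed
  hence "(Z 0 s)^2 = 0 \<and> (Z 1 s)^2 = 0 \<and> (Z 2 s)^2 = 0 \<and> (Z 3 s)^2 = 0"
    unfolding E_def by (smt (verit) zero_le_power2)
  thus ?thesis using j by (auto simp: less_Suc_eq numeral_eq_Suc)
qed



lemma sol_Y:
  fixes H u ua ub uc ud :: "real \<Rightarrow> real" and a L mu t :: real and S :: "real set"
  assumes oS: "open S" and Hpos': "\<forall>t\<in>S. H t > 0"
    and Hd': "\<forall>t\<in>S. (H has_real_derivative a*(t-L)*H t^3) (at t)"
    and d0': "\<forall>t\<in>S. (u has_real_derivative ua t) (at t)"
    and d1': "\<forall>t\<in>S. (ua has_real_derivative ub t) (at t)"
    and d2': "\<forall>t\<in>S. (ub has_real_derivative uc t) (at t)"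
    and d3': "\<forall>t\<in>S. (uc has_real_derivative ud t) (at t)"
    and eq': "\<forall>t\<in>S. deriv (deriv (\<lambda>t. 2 / H t ^ 3 * ub t)) t
              + mu * deriv (\<lambda>t. 2 / H t * ua t) t + 2*a*H t * u t = 0"
    and t: "t \<in> S"
  shows "(u has_real_derivative H t * (ua t / H t)) (at t)"
    "((\<lambda>t. ua t / H t) has_real_derivative H t * (ub t / H t^2 - a*(t-L)*ua t)) (at t)"
    "((\<lambda>t. ub t / H t^2 - a*(t-L)*ua t) has_real_derivative
        H t * (uc t / H t^3 - 3*a*(t-L)*ub t / H t - a*ua t / H t)) (at t)"
    "((\<lambda>t. uc t / H t^3 - 3*a*(t-L)*ub t / H t - a*ua t / H t) has_real_derivative
        H t * (- (mu + a) * (ub t / H t^2 - a*(t-L)*ua t) - a * u t)) (at t)"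
proof -
  have Hpos: "\<And>t. t \<in> S \<Longrightarrow> H t > 0" using Hpos' by blast
  have Hd: "\<And>t. t \<in> S \<Longrightarrow> (H has_real_derivative a*(t-L)*H t^3) (at t)" using Hd' by blast
  have d0: "\<And>t. t \<in> S \<Longrightarrow> (u has_real_derivative ua t) (at t)" using d0' by blast
  have d1: "\<And>t. t \<in> S \<Longrightarrow> (ua has_real_derivative ub t) (at t)" using d1' by blast
  have d2: "\<And>t. t \<in> S \<Longrightarrow> (ub has_real_derivative uc t) (at t)" using d2' by blast
  have d3: "\<And>t. t \<in> S \<Longrightarrow> (uc has_real_derivative ud t) (at t)" using d3' by blast
  have eq: "\<And>t. t \<in> S \<Longrightarrow> deriv (deriv (\<lambda>t. 2 / H t ^ 3 * ub t)) t
              + mu * deriv (\<lambda>t. 2 / H t * ua t) t + 2*a*H t * u t = 0" using eq' by blast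
  have tS: "t \<in> S" using t by simp
  have Hnz: "H t \<noteq> 0" using Hpos[OF t] by simp
  show "(u has_real_derivative H t * (ua t / H t)) (at t)" using d0[OF t] Hnz by simp
  show "((\<lambda>t. ua t / H t) has_real_derivative H t * (ub t / H t^2 - a*(t-L)*ua t)) (at t)"
    using Hd[OF t] d1[OF t] Hnz
    by (auto intro!: derivative_eq_intros simp: field_simps power2_eq_square power3_eq_cube)
  show "((\<lambda>t. ub t / H t^2 - a*(t-L)*ua t) has_real_derivative
        H t * (uc t / H t^3 - 3*a*(t-L)*ub t / H t - a*ua t / H t)) (at t)"
    using Hd[OF t] d1[OF t] d2[OF t] Hnz
    by (auto intro!: derivative_eq_intros simp: field_simps power2_eq_square power3_eq_cube)
  define R1 where "R1 t = -6*a*(t-L)/H t * ub t + 2/H t^3 * uc t" for t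
  define R2 where "R2 t = 2*ud t/H t^3 - 12*a*(t-L)*uc t/H t - 6*a*ub t/H t
      + 6*a^2*(t-L)^2*H t*ub t" for t
  have dR: "((\<lambda>t. 2 / H t ^ 3 * ub t) has_real_derivative R1 s) (at s)" if s: "s \<in> S" for s
  proof -
    have "H s \<noteq> 0" using Hpos s by force
    thus ?thesis using Hd[of s] d2[of s] s unfolding R1_def
      by (auto intro!: derivative_eq_intros simp: field_simps power2_eq_square power3_eq_cube)
  qed
  have dR1: "(R1 has_real_derivative R2 t) (at t)"
    unfolding R1_def[abs_def] R2_def using Hd[OF t] d2[OF t] d3[OF t] Hnz
    by (auto intro!: derivative_eq_intros simp: field_simps power2_eq_square power3_eq_cube)
  have "(deriv (\<lambda>t. 2 / H t ^ 3 * ub t) has_real_derivative R2 t) (at t)"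
  proof (rule has_field_derivative_transform_within_open[OF dR1 _ tS])
    show "open S" by (rule oS)
  next
    fix x assume "x \<in> S"
    then show "R1 x = deriv (\<lambda>t. 2 / H t ^ 3 * ub t) x" using DERIV_imp_deriv[OF dR[OF \<open>x \<in> S\<close>]] by simp
  qed
  hence e1: "deriv (deriv (\<lambda>t. 2 / H t ^ 3 * ub t)) t = R2 t" by (rule DERIV_imp_deriv)
  have "((\<lambda>t. 2 / H t * ua t) has_real_derivative -2*a*(t-L)*H t*ua t + 2*ub t/H t) (at t)"
    using Hd[OF t] d1[OF t] Hnz
    by (auto intro!: derivative_eq_intros simp: field_simps power2_eq_square power3_eq_cube)
  hence e2: "deriv (\<lambda>t. 2 / H t * ua t) t = -2*a*(t-L)*H t*ua t + 2*ub t/H t" by (rule DERIV_imp_deriv)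
  have E: "R2 t + mu * (-2*a*(t-L)*H t*ua t + 2*ub t/H t) + 2*a*H t * u t = 0"
    using eq[OF t] e1 e2 by simp
  define RHS where "RHS = - mu * (-2*a*(t-L)*H t*ua t + 2*ub t/H t) - 2*a*H t * u t
      + 12*a*(t-L)*uc t/H t + 6*a*ub t/H t - 6*a^2*(t-L)^2*H t*ub t"
  have "2*ud t/H t^3 = RHS" using E unfolding R2_def RHS_def by linarith
  hence ud: "ud t = H t^3 / 2 * RHS" using Hnz by (auto simp: field_simps)
  show "((\<lambda>t. uc t / H t^3 - 3*a*(t-L)*ub t / H t - a*ua t / H t) has_real_derivative
        H t * (- (mu + a) * (ub t / H t^2 - a*(t-L)*ua t) - a * u t)) (at t)"
    using Hd[OF t] d1[OF t] d2[OF t] d3[OF t] Hnz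
    apply (auto intro!: derivative_eq_intros)
    apply (simp add: ud RHS_def)
    apply (simp add: field_simps)
    by algebra
qed


lemma H_facts:
  fixes x0 L :: real
  assumes "0 < 3 * x0" and "3 * x0 < L"
  defines "a \<equiv> x0 / (L + x0)"
  shows "0 < a" "a < 1/4" "2 - lam x0 L = 2*a" "theta x0 L L = pi"
    "\<And>s. s \<in> {0<..<2*L} \<Longrightarrow> H x0 L s > 0"
    "\<And>s. s \<in> {0<..<2*L} \<Longrightarrow> (H x0 L has_real_derivative a*(s-L)*H x0 L s^3) (at s)"
    "\<And>s. s \<in> {0<..<2*L} \<Longrightarrow> (theta x0 L has_real_derivative H x0 L s) (at s)"
proof -
  have x0: "0 < x0" and L: "0 < L" using assms by auto
  show a0: "0 < a" unfolding a_def using x0 L by simp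
  show a4: "a < 1/4" unfolding a_def using x0 L assms(2) by (simp add: field_simps)
  show "2 - lam x0 L = 2*a" unfolding a_def lam_def using x0 L by (simp add: field_simps)
  define sg where "sg = sig x0 L"
  define K where "K = kk x0 L"
  have sg: "sg = pi * sqrt a" unfolding sg_def sig_def a_def by simp
  have sqa: "sqrt a < 1/2" using a4 a0
    by (metis real_sqrt_four real_sqrt_less_iff real_sqrt_divide real_sqrt_one)
  have sg0: "0 < sg" using sg a0 by simp
  have sg2: "sg < pi/2" using sg sqa by (simp add: pi_gt_zero)
  have sin0: "0 < sin sg" using sg0 sg2 by (intro sin_gt_zero) auto
  have sin1: "sin sg < 1" using sin_monotone_2pi[of sg "pi/2"] sg0 sg2 by simp
  hence KL: "L < K" unfolding K_def kk_def sg_def[symmetric] using sin0 L by (simp add: field_simps)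
  have sg2a: "sg^2 = pi^2 * a" using sg a0 by (simp add: power_mult_distrib)
  show "theta x0 L L = pi" unfolding theta_def by simp
  fix s assume s: "s \<in> {0<..<2*L}"
  have sL: "\<bar>s - L\<bar> < K" using s KL by auto
  have pos: "0 < K^2 - (s-L)^2"
  proof -
    have "(s-L)^2 < K^2" using power_strict_mono[of "\<bar>s-L\<bar>" K 2] sL by simp
    thus ?thesis by simp
  qed
  define R where "R = sqrt (K^2 - (s-L)^2)"
  have R0: "0 < R" unfolding R_def using pos by simp
  have R2: "R^2 = K^2 - (s-L)^2" unfolding R_def using pos by simp
  have Hs: "H x0 L s = pi / (sg * R)" unfolding H_def R_def sg_def K_def ..
  show "H x0 L s > 0" unfolding Hs using R0 sg0 by simp
  define F where "F s = sqrt (K^2 - (s-L)^2)" for s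
  have HF: "H x0 L = (\<lambda>s. pi / (sg * F s))" unfolding H_def[abs_def] F_def sg_def K_def ..
  have FR: "F s = R" unfolding F_def R_def ..
  have dF: "(F has_real_derivative - (s - L) / R) (at s)"
    unfolding F_def[abs_def] using pos R0
    by (auto intro!: derivative_eq_intros simp: R_def[symmetric] field_simps)
  have "(H x0 L has_real_derivative pi * (s - L) / (sg * R^3)) (at s)"
    unfolding HF using dF sg0 R0
    by (auto intro!: derivative_eq_intros simp: FR field_simps power3_eq_cube power2_eq_square)
  moreover have "pi * (s - L) / (sg * R^3) = a*(s-L)*H x0 L s^3"
    unfolding Hs using sg0 R0 sg2a pi_gt_zero a0
    by (simp add: field_simps power3_eq_cube power2_eq_square)
  ultimately show "(H x0 L has_real_derivative a*(s-L)*H x0 L s^3) (at s)" by simp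
  have KR: "R = K * sqrt (1 - ((s-L)/K)^2)"
  proof -
    have "K^2 - (s-L)^2 = K^2 * (1 - ((s-L)/K)^2)" using KL L by (simp add: field_simps)
    thus ?thesis unfolding R_def using KL L by (simp add: real_sqrt_mult)
  qed
  have m1: "-1 < (s-L)/K" "(s-L)/K < 1" using sL KL L by (auto simp: abs_less_iff field_simps)
  show "(theta x0 L has_real_derivative H x0 L s) (at s)"
    unfolding theta_def[abs_def] sg_def[symmetric] K_def[symmetric] Hs
    using m1 KL L sg0 R0
    by (auto intro!: derivative_eq_intros DERIV_arcsin simp: KR field_simps)
qed



lemma main_generic:
  fixes x0 L mu :: real and F1 F2 F3 F4 :: "nat \<Rightarrow> real \<Rightarrow> real"
  assumes hx: "0 < 3 * x0" "3 * x0 < L" and mu: "0 < mu"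
  defines "a \<equiv> x0 / (L + x0)"
  assumes d1: "\<And>j t. j < 4 \<Longrightarrow> (F1 j has_real_derivative F1 (Suc j) t) (at t)"
    and d2: "\<And>j t. j < 4 \<Longrightarrow> (F2 j has_real_derivative F2 (Suc j) t) (at t)"
    and d3: "\<And>j t. j < 4 \<Longrightarrow> (F3 j has_real_derivative F3 (Suc j) t) (at t)"
    and d4: "\<And>j t. j < 4 \<Longrightarrow> (F4 j has_real_derivative F4 (Suc j) t) (at t)"
    and o1: "\<And>t. F1 4 t = - (mu + a) * F1 2 t - a * F1 0 t"
    and o2: "\<And>t. F2 4 t = - (mu + a) * F2 2 t - a * F2 0 t"
    and o3: "\<And>t. F3 4 t = - (mu + a) * F3 2 t - a * F3 0 t"
    and o4: "\<And>t. F4 4 t = - (mu + a) * F4 2 t - a * F4 0 t"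
    and inj0: "\<And>c1 c2 c3 c4. (\<And>j. j < 4 \<Longrightarrow> c1 * F1 j 0 + c2 * F2 j 0 + c3 * F3 j 0 + c4 * F4 j 0 = 0)
         \<Longrightarrow> c1 = 0 \<and> c2 = 0 \<and> c3 = 0 \<and> c4 = 0"
  shows "general_solution_basis x0 L mu (F1 0) (F2 0) (F3 0) (F4 0)"
proof -
  note HF = H_facts[OF hx, folded a_def]
  have a0: "0 < a" using HF(1) .
  define G where "G c j t = fst c * F1 j t + fst (snd c) * F2 j t + fst (snd (snd c)) * F3 j t
      + snd (snd (snd c)) * F4 j t" for c :: "real \<times> real \<times> real \<times> real" and j t
  have dG: "(G c j has_real_derivative G c (Suc j) t) (at t)" if "j < 4" for c j t
    unfolding G_def using d1[OF that] d2[OF that] d3[OF that] d4[OF that]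
    by (auto intro!: derivative_eq_intros)
  have oG: "G c 4 t = - (mu + a) * G c 2 t - a * G c 0 t" for c t
    unfolding G_def o1 o2 o3 o4 by (simp add: algebra_simps)
  have U: "c = 0" if z: "\<And>j. j < 4 \<Longrightarrow> G c j pi = 0" for c
  proof -
    have "G c j 0 = 0" if j: "j < 4" for j
    proof (rule energy_zero[where Z = "G c" and h = "\<lambda>_. 1" and Th = "\<lambda>t. t" and lo = "-1" and hi = 4
          and pz = pi and A = "mu + a" and B = a and s = 0 and j = j])
      show "- 1 < pi" "pi < 4" using pi_gt3 pi_less_4 by auto
      show "(G c j has_real_derivative 1 * G c (Suc j) s) (at s)" if "j < 3" for s j
        using dG[of j] that by simp
      show "(G c 3 has_real_derivative 1 * (- (mu + a) * G c 2 s - a * G c 0 s)) (at s)" for s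
        using dG[of 3 c s] oG by (simp add: numeral_eq_Suc)
      show "((\<lambda>t. t) has_real_derivative 1) (at s)" for s by (rule DERIV_ident)
    qed (use a0 mu z j in auto)
    hence "G c 0 0 = 0" "G c 1 0 = 0" "G c 2 0 = 0" "G c 3 0 = 0" by auto
    hence "fst c = 0 \<and> fst (snd c) = 0 \<and> fst (snd (snd c)) = 0 \<and> snd (snd (snd c)) = 0"
      by (intro inj0) (auto simp: G_def less_Suc_eq numeral_eq_Suc)
    thus ?thesis by (simp add: prod_eq_iff)
  qed
  define Phi where "Phi c = (G c 0 pi, G c 1 pi, G c 2 pi, G c 3 pi)" for c
  have Glin: "G (c - d) j t = G c j t - G d j t" for c d j t
    unfolding G_def by (simp add: algebra_simps)
  have "linear Phi"
    by (rule linearI) (auto simp: Phi_def G_def algebra_simps)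
  moreover have "inj Phi"
  proof (rule injI)
    fix c d assume "Phi c = Phi d"
    hence "G (c - d) j pi = 0" if "j < 4" for j
      using that by (auto simp: Phi_def Glin less_Suc_eq numeral_eq_Suc)
    thus "c = d" using U[of "c - d"] by simp
  qed
  ultimately have surjPhi: "surj Phi" using linear_injective_imp_surjective by blast
  show ?thesis
    unfolding general_solution_basis_def
  proof (intro conjI allI impI)
    define S where "S = {0<..<2*L}"
    have L0: "0 < L" using hx by simp
    have LS: "L \<in> S" unfolding S_def using L0 by simp
    have oS: "open S" unfolding S_def by simp
    have Hpos: "\<And>s. s \<in> S \<Longrightarrow> H x0 L s > 0" using HF(5) unfolding S_def .
    have dth: "\<And>s. s \<in> S \<Longrightarrow> (theta x0 L has_real_derivative H x0 L s) (at s)"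
      using HF(7) unfolding S_def .
    have dGth: "((\<lambda>s. G c j (theta x0 L s)) has_real_derivative H x0 L s * G c (Suc j) (theta x0 L s)) (at s)"
      if "s \<in> S" "j < 4" for c j s
      using DERIV_chain2[OF dG[OF that(2)] dth[OF that(1)]] by (simp add: mult.commute)
    {
      fix u assume sol: "is_solution x0 L mu u"
      have C4: "\<forall>n<4. \<forall>s\<in>S. ((deriv ^^ n) u has_real_derivative (deriv ^^ Suc n) u s) (at s)"
        using sol unfolding is_solution_def C4_on_def S_def by blast
      have du0: "\<And>s. s \<in> S \<Longrightarrow> (u has_real_derivative deriv u s) (at s)"
      proof -
        fix s assume "s \<in> S"
        then have "((deriv ^^ 0) u has_real_derivative (deriv ^^ Suc 0) u s) (at s)"
          by (intro C4[rule_format]) auto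
        thus "(u has_real_derivative deriv u s) (at s)" by simp
      qed
      have du1: "\<And>s. s \<in> S \<Longrightarrow> (deriv u has_real_derivative deriv (deriv u) s) (at s)"
      proof -
        fix s assume "s \<in> S"
        then have "((deriv ^^ 1) u has_real_derivative (deriv ^^ Suc 1) u s) (at s)"
          by (intro C4[rule_format]) auto
        thus "(deriv u has_real_derivative deriv (deriv u) s) (at s)" by simp
      qed
      have du2: "\<And>s. s \<in> S \<Longrightarrow> (deriv (deriv u) has_real_derivative deriv (deriv (deriv u)) s) (at s)"
      proof -
        fix s assume "s \<in> S"
        then have "((deriv ^^ 2) u has_real_derivative (deriv ^^ Suc 2) u s) (at s)"
          by (intro C4[rule_format]) auto
        thus "(deriv (deriv u) has_real_derivative deriv (deriv (deriv u)) s) (at s)"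
          by (simp add: numeral_eq_Suc)
      qed
      have du3: "\<And>s. s \<in> S \<Longrightarrow> (deriv (deriv (deriv u)) has_real_derivative deriv (deriv (deriv (deriv u))) s) (at s)"
      proof -
        fix s assume "s \<in> S"
        then have "((deriv ^^ 3) u has_real_derivative (deriv ^^ Suc 3) u s) (at s)"
          by (intro C4[rule_format]) auto
        thus "(deriv (deriv (deriv u)) has_real_derivative deriv (deriv (deriv (deriv u))) s) (at s)"
          by (simp add: numeral_eq_Suc)
      qed
      have eq: "\<And>t. t \<in> S \<Longrightarrow> deriv (deriv (\<lambda>t. 2 / H x0 L t ^ 3 * deriv (deriv u) t)) t
              + mu * deriv (\<lambda>t. 2 / H x0 L t * deriv u t) t + 2*a*H x0 L t * u t = 0"
        using sol HF(3) unfolding is_solution_def S_def rr_def qq_def pp_def by auto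
      have Hpos': "\<forall>s\<in>S. H x0 L s > 0" using Hpos by blast
      have Hd': "\<forall>s\<in>S. (H x0 L has_real_derivative a*(s-L)*H x0 L s^3) (at s)"
        using HF(6) unfolding S_def by blast
      have du0': "\<forall>s\<in>S. (u has_real_derivative deriv u s) (at s)" using du0 by blast
      have du1': "\<forall>s\<in>S. (deriv u has_real_derivative deriv (deriv u) s) (at s)" using du1 by blast
      have du2': "\<forall>s\<in>S. (deriv (deriv u) has_real_derivative deriv (deriv (deriv u)) s) (at s)" using du2 by blast
      have du3': "\<forall>s\<in>S. (deriv (deriv (deriv u)) has_real_derivative deriv (deriv (deriv (deriv u))) s) (at s)" using du3 by blast
      have eq': "\<forall>t\<in>S. deriv (deriv (\<lambda>t. 2 / H x0 L t ^ 3 * deriv (deriv u) t)) t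
              + mu * deriv (\<lambda>t. 2 / H x0 L t * deriv u t) t + 2*a*H x0 L t * u t = 0" using eq by blast
      note SY = sol_Y[OF oS Hpos' Hd' du0' du1' du2' du3' eq']
      define Y where "Y j s = (if j = 0 then u s else if j = 1 then deriv u s / H x0 L s
        else if j = 2 then deriv (deriv u) s / H x0 L s^2 - a*(s-L)*deriv u s
        else deriv (deriv (deriv u)) s / H x0 L s^3 - 3*a*(s-L)*deriv (deriv u) s / H x0 L s
          - a*deriv u s / H x0 L s)" for j :: nat and s
      have Y0: "Y 0 = u" by (rule ext) (simp add: Y_def)
      have Y1: "Y 1 = (\<lambda>t. deriv u t / H x0 L t)" by (rule ext) (simp add: Y_def)
      have Y2: "Y 2 = (\<lambda>t. deriv (deriv u) t / H x0 L t^2 - a*(t-L)*deriv u t)" by (rule ext) (simp add: Y_def)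
      have Y3: "Y 3 = (\<lambda>t. deriv (deriv (deriv u)) t / H x0 L t^3 - 3*a*(t-L)*deriv (deriv u) t / H x0 L t
          - a*deriv u t / H x0 L t)" by (rule ext) (simp add: Y_def)
      have dY: "(Y j has_real_derivative H x0 L s * Y (Suc j) s) (at s)" if "s \<in> S" "j < 3" for j s
      proof -
        have "j = 0 \<or> j = 1 \<or> j = 2" using that(2) by auto
        moreover have "(Y 0 has_real_derivative H x0 L s * Y 1 s) (at s)"
          using SY(1)[OF that(1)] unfolding Y0 Y1 by simp
        moreover have "(Y 1 has_real_derivative H x0 L s * Y 2 s) (at s)"
          using SY(2)[OF that(1)] unfolding Y1 Y2 by simp
        moreover have "(Y 2 has_real_derivative H x0 L s * Y 3 s) (at s)"
          using SY(3)[OF that(1)] unfolding Y3 Y2 by simp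
        ultimately show ?thesis by (auto simp: numeral_eq_Suc)
      qed
      have dY3: "(Y 3 has_real_derivative H x0 L s * (- (mu + a) * Y 2 s - a * Y 0 s)) (at s)"
        if "s \<in> S" for s
        using SY(4)[OF that] unfolding Y0 Y2 Y3 .
      obtain c where c: "Phi c = (Y 0 L, Y 1 L, Y 2 L, Y 3 L)" using surjPhi by (metis surjD)
      define Z where "Z j s = Y j s - G c j (theta x0 L s)" for j s
      have Zs: "Z 0 s = 0" if s: "s \<in> S" for s
      proof (rule energy_zero[where Z = Z and h = "H x0 L" and Th = "theta x0 L" and lo = 0 and hi = "2*L"
            and pz = L and A = "mu + a" and B = a and s = s and j = 0])
        show "0 < L" "L < 2*L" using L0 by auto
        show "(Z j has_real_derivative H x0 L s * Z (Suc j) s) (at s)"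
          if "s \<in> {0<..<2*L}" "j < 3" for s j
        proof -
          have sS: "s \<in> S" using that(1) S_def by simp
          show ?thesis unfolding Z_def[abs_def] using dY[OF sS that(2)] dGth[OF sS, where c = c and j = j] that(2)
            by (auto intro!: derivative_eq_intros simp: algebra_simps)
        qed
        show "(Z 3 has_real_derivative H x0 L s * (- (mu + a) * Z 2 s - a * Z 0 s)) (at s)"
          if "s \<in> {0<..<2*L}" for s
        proof -
          have sS: "s \<in> S" using that(1) S_def by simp
          have "((\<lambda>s. G c 3 (theta x0 L s)) has_real_derivative H x0 L s * G c 4 (theta x0 L s)) (at s)"
            using dGth[OF sS, where c = c and j = 3] by simp
          hence dd: "((\<lambda>s. G c 3 (theta x0 L s)) has_real_derivative
              H x0 L s * (- (mu + a) * G c 2 (theta x0 L s) - a * G c 0 (theta x0 L s))) (at s)"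
            unfolding oG .
          show ?thesis unfolding Z_def[abs_def] using dY3[OF sS] dd
            by (auto intro!: derivative_eq_intros simp: algebra_simps)
        qed
        show "Z j L = 0" if "j < 4" for j
          using c that HF(4) unfolding Z_def Phi_def by (auto simp: less_Suc_eq numeral_eq_Suc)
      qed (use a0 mu s S_def dth Hpos in \<open>auto simp: less_imp_le\<close>)
      have "\<exists>c1 c2 c3 c4. \<forall>s\<in>{0<..<2*L}. u s = c1 * F1 0 (theta x0 L s) + c2 * F2 0 (theta x0 L s)
               + c3 * F3 0 (theta x0 L s) + c4 * F4 0 (theta x0 L s)"
      proof (intro exI ballI)
        fix s assume "s \<in> {0<..<2*L}"
        thus "u s = fst c * F1 0 (theta x0 L s) + fst (snd c) * F2 0 (theta x0 L s)
               + fst (snd (snd c)) * F3 0 (theta x0 L s) + snd (snd (snd c)) * F4 0 (theta x0 L s)"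
          using Zs[of s] unfolding Z_def G_def S_def Y0 by simp
      qed
    }
    thus "\<And>u. is_solution x0 L mu u \<Longrightarrow> \<exists>c1 c2 c3 c4. \<forall>s\<in>{0<..<2*L}. u s = c1 * F1 0 (theta x0 L s) + c2 * F2 0 (theta x0 L s)
               + c3 * F3 0 (theta x0 L s) + c4 * F4 0 (theta x0 L s)" by blast
    fix c1 c2 c3 c4
    assume z: "\<forall>s\<in>{0<..<2*L}. c1 * F1 0 (theta x0 L s) + c2 * F2 0 (theta x0 L s)
           + c3 * F3 0 (theta x0 L s) + c4 * F4 0 (theta x0 L s) = 0"
    define c where "c = (c1, c2, c3, c4)"
    have W: "\<forall>s\<in>S. G c j (theta x0 L s) = 0" if "j < 4" for j
      using that
    proof (induction j)
      case 0
      then show ?case using z unfolding G_def c_def S_def by simp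
    next
      case (Suc j)
      hence IH: "\<forall>s\<in>S. G c j (theta x0 L s) = 0" by simp
      show ?case
      proof
        fix s assume s: "s \<in> S"
        have "((\<lambda>s. G c j (theta x0 L s)) has_real_derivative 0) (at s)"
          by (rule has_field_derivative_transform_within_open[OF DERIV_const oS s]) (use IH in auto)
        moreover have "((\<lambda>s. G c j (theta x0 L s)) has_real_derivative H x0 L s * G c (Suc j) (theta x0 L s)) (at s)"
          using dGth[OF s] Suc.prems by simp
        ultimately have "H x0 L s * G c (Suc j) (theta x0 L s) = 0" using DERIV_unique by blast
        thus "G c (Suc j) (theta x0 L s) = 0" using Hpos[OF s] by simp
      qed
    qed
    have "G c j pi = 0" if "j < 4" for j using W[OF that] LS HF(4) by auto
    hence "c = 0" by (rule U)
    thus "c1 = 0" "c2 = 0" "c3 = 0" "c4 = 0" unfolding c_def by (simp_all add: zero_prod_def)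
  qed
qed



definition sinF :: "real \<Rightarrow> nat \<Rightarrow> real \<Rightarrow> real" where
  "sinF w j t = (if j = 0 then sin (w*t) else if j = 1 then w * cos (w*t)
     else if j = 2 then - (w^2 * sin (w*t)) else if j = 3 then - (w^3 * cos (w*t)) else w^4 * sin (w*t))"

definition cosF :: "real \<Rightarrow> nat \<Rightarrow> real \<Rightarrow> real" where
  "cosF w j t = (if j = 0 then cos (w*t) else if j = 1 then - (w * sin (w*t))
     else if j = 2 then - (w^2 * cos (w*t)) else if j = 3 then w^3 * sin (w*t) else w^4 * cos (w*t))"

definition tsinF :: "real \<Rightarrow> nat \<Rightarrow> real \<Rightarrow> real" where
  "tsinF w j t = (if j = 0 then t * sin (w*t) else if j = 1 then sin (w*t) + w * t * cos (w*t)
     else if j = 2 then 2 * w * cos (w*t) - w^2 * t * sin (w*t)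
     else if j = 3 then - 3 * w^2 * sin (w*t) - w^3 * t * cos (w*t)
     else - 4 * w^3 * cos (w*t) + w^4 * t * sin (w*t))"

definition tcosF :: "real \<Rightarrow> nat \<Rightarrow> real \<Rightarrow> real" where
  "tcosF w j t = (if j = 0 then t * cos (w*t) else if j = 1 then cos (w*t) - w * t * sin (w*t)
     else if j = 2 then - 2 * w * sin (w*t) - w^2 * t * cos (w*t)
     else if j = 3 then - 3 * w^2 * cos (w*t) + w^3 * t * sin (w*t)
     else 4 * w^3 * sin (w*t) + w^4 * t * cos (w*t))"

lemma j_cases4: "j < (4::nat) \<Longrightarrow> j = 0 \<or> j = 1 \<or> j = 2 \<or> j = 3" by auto

lemma sinF_d: "j < 4 \<Longrightarrow> (sinF w j has_real_derivative sinF w (Suc j) t) (at t)"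
proof -
  assume "j < 4"
  hence "j = 0 \<or> j = 1 \<or> j = 2 \<or> j = 3" by auto
  moreover have "sinF w 0 = (\<lambda>t. sin (w*t))" "sinF w 1 = (\<lambda>t. w * cos (w*t))"
    "sinF w 2 = (\<lambda>t. - (w^2 * sin (w*t)))" "sinF w 3 = (\<lambda>t. - (w^3 * cos (w*t)))"
    by (rule ext, simp add: sinF_def)+
  ultimately show ?thesis
    by (auto simp: sinF_def numeral_eq_Suc intro!: derivative_eq_intros)
qed

lemma cosF_d: "j < 4 \<Longrightarrow> (cosF w j has_real_derivative cosF w (Suc j) t) (at t)"
proof -
  assume "j < 4"
  hence "j = 0 \<or> j = 1 \<or> j = 2 \<or> j = 3" by auto
  moreover have "cosF w 0 = (\<lambda>t. cos (w*t))" "cosF w 1 = (\<lambda>t. - (w * sin (w*t)))"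
    "cosF w 2 = (\<lambda>t. - (w^2 * cos (w*t)))" "cosF w 3 = (\<lambda>t. w^3 * sin (w*t))"
    by (rule ext, simp add: cosF_def)+
  ultimately show ?thesis
    by (auto simp: cosF_def numeral_eq_Suc intro!: derivative_eq_intros)
qed

lemma tsinF_d: "j < 4 \<Longrightarrow> (tsinF w j has_real_derivative tsinF w (Suc j) t) (at t)"
proof -
  assume "j < 4"
  hence "j = 0 \<or> j = 1 \<or> j = 2 \<or> j = 3" by auto
  moreover have "tsinF w 0 = (\<lambda>t. t * sin (w*t))" "tsinF w 1 = (\<lambda>t. sin (w*t) + w * t * cos (w*t))"
    "tsinF w 2 = (\<lambda>t. 2 * w * cos (w*t) - w^2 * t * sin (w*t))"
    "tsinF w 3 = (\<lambda>t. - 3 * w^2 * sin (w*t) - w^3 * t * cos (w*t))"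
    by (rule ext, simp add: tsinF_def)+
  ultimately show ?thesis
    by (auto simp: tsinF_def numeral_eq_Suc intro!: derivative_eq_intros)
qed

lemma tcosF_d: "j < 4 \<Longrightarrow> (tcosF w j has_real_derivative tcosF w (Suc j) t) (at t)"
proof -
  assume "j < 4"
  hence "j = 0 \<or> j = 1 \<or> j = 2 \<or> j = 3" by auto
  moreover have "tcosF w 0 = (\<lambda>t. t * cos (w*t))" "tcosF w 1 = (\<lambda>t. cos (w*t) - w * t * sin (w*t))"
    "tcosF w 2 = (\<lambda>t. - 2 * w * sin (w*t) - w^2 * t * cos (w*t))"
    "tcosF w 3 = (\<lambda>t. - 3 * w^2 * cos (w*t) + w^3 * t * sin (w*t))"
    by (rule ext, simp add: tcosF_def)+
  ultimately show ?thesis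
    by (auto simp: tcosF_def numeral_eq_Suc intro!: derivative_eq_intros)
qed

lemma sinF_ode: "w^4 - A*w^2 + B = 0 \<Longrightarrow> sinF w 4 t = - A * sinF w 2 t - B * sinF w 0 t"
proof -
  assume "w^4 - A*w^2 + B = 0"
  hence h: "w^4 = A*w^2 - B" by simp
  show ?thesis unfolding sinF_def by (simp add: h algebra_simps)
qed

lemma cosF_ode: "w^4 - A*w^2 + B = 0 \<Longrightarrow> cosF w 4 t = - A * cosF w 2 t - B * cosF w 0 t"
proof -
  assume "w^4 - A*w^2 + B = 0"
  hence h: "w^4 = A*w^2 - B" by simp
  show ?thesis unfolding cosF_def by (simp add: h algebra_simps)
qed

lemma tsinF_ode: "tsinF w 4 t = - (2*w^2) * tsinF w 2 t - w^4 * tsinF w 0 t"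
  unfolding tsinF_def by (simp add: algebra_simps power2_eq_square power3_eq_cube power4_eq_xxxx)

lemma tcosF_ode: "tcosF w 4 t = - (2*w^2) * tcosF w 2 t - w^4 * tcosF w 0 t"
  unfolding tcosF_def by (simp add: algebra_simps power2_eq_square power3_eq_cube power4_eq_xxxx)



lemma case3:
  fixes x0 L mu :: real
  assumes hx: "0 < 3 * x0" "3 * x0 < L" and mu: "0 < mu" and m: "mu > mu0 x0 L"
  defines "a \<equiv> x0 / (L + x0)"
  defines "\<alpha> \<equiv> sqrt (mu + a + 2 * sqrt a) / 2"
  defines "\<gamma> \<equiv> sqrt (mu + a - 2 * sqrt a) / 2"
  shows "general_solution_basis x0 L mu
        (\<lambda>t. sin ((\<alpha> - \<gamma>) * t)) (\<lambda>t. sin ((\<alpha> + \<gamma>) * t))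
        (\<lambda>t. cos ((\<alpha> - \<gamma>) * t)) (\<lambda>t. cos ((\<alpha> + \<gamma>) * t))"
proof -
  note HF = H_facts[OF hx, folded a_def]
  define r where "r = sqrt a"
  have a0: "0 < a" using HF(1) .
  have r0: "0 < r" using a0 unfolding r_def by simp
  have r2: "r^2 = a" using a0 unfolding r_def by simp
  have hm: "mu + a - 2*r > 0" using m unfolding mu0_def a_def[symmetric] r_def[symmetric] by simp
  have g0: "0 < \<gamma>" unfolding \<gamma>_def r_def[symmetric] using hm by simp
  have al2: "\<alpha>^2 = (mu + a + 2*r)/4" unfolding \<alpha>_def r_def[symmetric] using hm r0
    by (simp add: power_divide)
  have ga2: "\<gamma>^2 = (mu + a - 2*r)/4" unfolding \<gamma>_def r_def[symmetric] using hm
    by (simp add: power_divide)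
  have al0: "0 < \<alpha>" unfolding \<alpha>_def r_def[symmetric] using hm r0 by simp
  have "\<gamma>^2 < \<alpha>^2" using al2 ga2 r0 by simp
  hence ga: "\<gamma> < \<alpha>" using g0 al0 by (simp add: power_less_imp_less_base)
  define p where "p = \<alpha> - \<gamma>"
  define q where "q = \<alpha> + \<gamma>"
  have p0: "0 < p" "0 < q" "p < q" using ga g0 unfolding p_def q_def by auto
  have A: "mu + a = 2*(\<alpha>^2 + \<gamma>^2)" using al2 ga2 by simp
  have "\<alpha>^2 - \<gamma>^2 = r" using al2 ga2 by simp
  hence B: "a = (\<alpha>^2 - \<gamma>^2)^2" using r2 by simp
  have op: "p^4 - (mu + a)*p^2 + a = 0" unfolding A p_def by (subst B) algebra
  have oq: "q^4 - (mu + a)*q^2 + a = 0" unfolding A q_def by (subst B) algebra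
  have "general_solution_basis x0 L mu (sinF p 0) (sinF q 0) (cosF p 0) (cosF q 0)"
  proof (rule main_generic[OF hx mu])
    show "\<And>j t. j < 4 \<Longrightarrow> (sinF p j has_real_derivative sinF p (Suc j) t) (at t)" by (rule sinF_d)
    show "\<And>j t. j < 4 \<Longrightarrow> (sinF q j has_real_derivative sinF q (Suc j) t) (at t)" by (rule sinF_d)
    show "\<And>j t. j < 4 \<Longrightarrow> (cosF p j has_real_derivative cosF p (Suc j) t) (at t)" by (rule cosF_d)
    show "\<And>j t. j < 4 \<Longrightarrow> (cosF q j has_real_derivative cosF q (Suc j) t) (at t)" by (rule cosF_d)
    show "\<And>t. sinF p 4 t = - (mu + x0 / (L + x0)) * sinF p 2 t - x0 / (L + x0) * sinF p 0 t"
      using sinF_ode[OF op] unfolding a_def .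
    show "\<And>t. sinF q 4 t = - (mu + x0 / (L + x0)) * sinF q 2 t - x0 / (L + x0) * sinF q 0 t"
      using sinF_ode[OF oq] unfolding a_def .
    show "\<And>t. cosF p 4 t = - (mu + x0 / (L + x0)) * cosF p 2 t - x0 / (L + x0) * cosF p 0 t"
      using cosF_ode[OF op] unfolding a_def .
    show "\<And>t. cosF q 4 t = - (mu + x0 / (L + x0)) * cosF q 2 t - x0 / (L + x0) * cosF q 0 t"
      using cosF_ode[OF oq] unfolding a_def .
    fix c1 c2 c3 c4
    assume z: "\<And>j. j < 4 \<Longrightarrow> c1 * sinF p j 0 + c2 * sinF q j 0 + c3 * cosF p j 0 + c4 * cosF q j 0 = 0"
    have e0: "c3 + c4 = 0" using z[of 0] by (simp add: sinF_def cosF_def)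
    have e1: "p * c1 + q * c2 = 0" using z[of 1] by (simp add: sinF_def cosF_def algebra_simps)
    have e2: "p^2 * c3 + q^2 * c4 = 0" using z[of 2] by (simp add: sinF_def cosF_def algebra_simps)
    have e3: "p^3 * c1 + q^3 * c2 = 0" using z[of 3] by (simp add: sinF_def cosF_def algebra_simps)
    have pq2: "p^2 < q^2" using p0 by (simp add: power_strict_mono)
    have c3e: "c3 = - c4" using e0 by simp
    have "(q^2 - p^2) * c4 = p^2 * c3 + q^2 * c4" unfolding c3e by (simp add: algebra_simps)
    hence "(q^2 - p^2) * c4 = 0" using e2 by simp
    hence c4: "c4 = 0" using pq2 by simp
    hence c3: "c3 = 0" using e0 by simp
    have qc2: "q * c2 = - (p * c1)" using e1 by simp
    have "q^3 * c2 = q^2 * (q * c2)" by (simp add: power3_eq_cube power2_eq_square)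
    hence "p^3 * c1 - q^2 * (p * c1) = 0" using e3 qc2 by simp
    hence "(p * c1) * (p^2 - q^2) = 0" by (simp add: algebra_simps power3_eq_cube power2_eq_square)
    hence "c1 = 0" using p0 pq2 by simp
    moreover have "c2 = 0" using qc2 calculation p0 by simp
    ultimately show "c1 = 0 \<and> c2 = 0 \<and> c3 = 0 \<and> c4 = 0" using c3 c4 by simp
  qed
  moreover have "sinF w 0 = (\<lambda>t. sin (w*t))" "cosF w 0 = (\<lambda>t. cos (w*t))" for w
    by (rule ext, simp add: sinF_def cosF_def)+
  ultimately show ?thesis unfolding p_def q_def by simp
qed



lemma case2:
  fixes x0 L mu :: real
  assumes hx: "0 < 3 * x0" "3 * x0 < L" and mu: "0 < mu" and m: "mu = mu0 x0 L"
  defines "a \<equiv> x0 / (L + x0)"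
  defines "\<alpha> \<equiv> sqrt (mu + a + 2 * sqrt a) / 2"
  shows "general_solution_basis x0 L mu
        (\<lambda>t. sin (\<alpha> * t)) (\<lambda>t. cos (\<alpha> * t))
        (\<lambda>t. t * sin (\<alpha> * t)) (\<lambda>t. t * cos (\<alpha> * t))"
proof -
  note HF = H_facts[OF hx, folded a_def]
  define r where "r = sqrt a"
  have a0: "0 < a" using HF(1) .
  have r0: "0 < r" using a0 unfolding r_def by simp
  have r2: "r^2 = a" using a0 unfolding r_def by simp
  have hm: "mu + a = 2*r" using m unfolding mu0_def a_def[symmetric] r_def[symmetric] by simp
  have al2: "\<alpha>^2 = r" unfolding \<alpha>_def r_def[symmetric] hm using r0
    by (simp add: power_divide)
  have al0: "0 < \<alpha>" unfolding \<alpha>_def r_def[symmetric] hm using r0 by simp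
  have A: "mu + a = 2*\<alpha>^2" using hm al2 by simp
  have B: "a = \<alpha>^4" using r2 al2 by (metis power_mult numeral_times_numeral semiring_norm(12) semiring_norm(13))
  have oa: "\<alpha>^4 - (mu + a)*\<alpha>^2 + a = 0" unfolding A by (subst B) (simp add: algebra_simps power4_eq_xxxx power2_eq_square)
  have "general_solution_basis x0 L mu (sinF \<alpha> 0) (cosF \<alpha> 0) (tsinF \<alpha> 0) (tcosF \<alpha> 0)"
  proof (rule main_generic[OF hx mu])
    show "\<And>j t. j < 4 \<Longrightarrow> (sinF \<alpha> j has_real_derivative sinF \<alpha> (Suc j) t) (at t)" by (rule sinF_d)
    show "\<And>j t. j < 4 \<Longrightarrow> (cosF \<alpha> j has_real_derivative cosF \<alpha> (Suc j) t) (at t)" by (rule cosF_d)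
    show "\<And>j t. j < 4 \<Longrightarrow> (tsinF \<alpha> j has_real_derivative tsinF \<alpha> (Suc j) t) (at t)" by (rule tsinF_d)
    show "\<And>j t. j < 4 \<Longrightarrow> (tcosF \<alpha> j has_real_derivative tcosF \<alpha> (Suc j) t) (at t)" by (rule tcosF_d)
    show "\<And>t. sinF \<alpha> 4 t = - (mu + x0 / (L + x0)) * sinF \<alpha> 2 t - x0 / (L + x0) * sinF \<alpha> 0 t"
      using sinF_ode[OF oa] unfolding a_def .
    show "\<And>t. cosF \<alpha> 4 t = - (mu + x0 / (L + x0)) * cosF \<alpha> 2 t - x0 / (L + x0) * cosF \<alpha> 0 t"
      using cosF_ode[OF oa] unfolding a_def .
    show "\<And>t. tsinF \<alpha> 4 t = - (mu + x0 / (L + x0)) * tsinF \<alpha> 2 t - x0 / (L + x0) * tsinF \<alpha> 0 t"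
      using tsinF_ode[of \<alpha>] unfolding a_def[symmetric] A B[symmetric] .
    show "\<And>t. tcosF \<alpha> 4 t = - (mu + x0 / (L + x0)) * tcosF \<alpha> 2 t - x0 / (L + x0) * tcosF \<alpha> 0 t"
      using tcosF_ode[of \<alpha>] unfolding a_def[symmetric] A B[symmetric] .
    fix c1 c2 c3 c4
    assume z: "\<And>j. j < 4 \<Longrightarrow> c1 * sinF \<alpha> j 0 + c2 * cosF \<alpha> j 0 + c3 * tsinF \<alpha> j 0 + c4 * tcosF \<alpha> j 0 = 0"
    have e0: "c2 = 0" using z[of 0] by (simp add: sinF_def cosF_def tsinF_def tcosF_def)
    have e1: "\<alpha> * c1 + c4 = 0" using z[of 1] by (simp add: sinF_def cosF_def tsinF_def tcosF_def algebra_simps)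
    have e2: "- (\<alpha>^2 * c2) + 2 * \<alpha> * c3 = 0" using z[of 2] by (simp add: sinF_def cosF_def tsinF_def tcosF_def algebra_simps)
    have e3: "- (\<alpha>^3 * c1) - 3 * \<alpha>^2 * c4 = 0" using z[of 3] by (simp add: sinF_def cosF_def tsinF_def tcosF_def algebra_simps)
    have c3: "c3 = 0" using e2 e0 al0 by simp
    have c4e: "c4 = - (\<alpha> * c1)" using e1 by simp
    have "2 * \<alpha>^3 * c1 = 0" using e3 unfolding c4e by (simp add: algebra_simps power3_eq_cube power2_eq_square)
    hence c1: "c1 = 0" using al0 by simp
    show "c1 = 0 \<and> c2 = 0 \<and> c3 = 0 \<and> c4 = 0" using c1 c3 e0 c4e by simp
  qed
  moreover have "sinF w 0 = (\<lambda>t. sin (w*t))" "cosF w 0 = (\<lambda>t. cos (w*t))"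
      "tsinF w 0 = (\<lambda>t. t * sin (w*t))" "tcosF w 0 = (\<lambda>t. t * cos (w*t))" for w
    by (rule ext, simp add: sinF_def cosF_def tsinF_def tcosF_def)+
  ultimately show ?thesis by simp
qed



definition bval :: "real \<Rightarrow> real \<Rightarrow> real \<times> real \<times> real \<times> real \<Rightarrow> real \<Rightarrow> real" where
  "bval al be v t = fst v * (cos (al*t) * sinh (be*t)) + fst (snd v) * (sin (al*t) * cosh (be*t))
     + fst (snd (snd v)) * (sin (al*t) * sinh (be*t)) + snd (snd (snd v)) * (cos (al*t) * cosh (be*t))"

definition dv :: "real \<Rightarrow> real \<Rightarrow> real \<times> real \<times> real \<times> real \<Rightarrow> real \<times> real \<times> real \<times> real" where
  "dv al be v = (al * fst (snd (snd v)) + be * snd (snd (snd v)), be * fst (snd (snd v)) - al * snd (snd (snd v)),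
      - al * fst v + be * fst (snd v), be * fst v + al * fst (snd v))"

definition hypF :: "real \<Rightarrow> real \<Rightarrow> real \<times> real \<times> real \<times> real \<Rightarrow> nat \<Rightarrow> real \<Rightarrow> real" where
  "hypF al be v j = bval al be ((dv al be ^^ j) v)"

lemma bval_d: "(bval al be v has_real_derivative bval al be (dv al be v) t) (at t)"
  unfolding bval_def[abs_def] dv_def
  by (auto intro!: derivative_eq_intros simp: algebra_simps)

lemma hypF_d: "(hypF al be v j has_real_derivative hypF al be v (Suc j) t) (at t)"
  unfolding hypF_def using bval_d by simp

lemma hypF_ode:
  assumes "A = 2 * (al^2 - be^2)" "B = (al^2 + be^2)^2"
  shows "hypF al be v 4 t = - A * hypF al be v 2 t - B * hypF al be v 0 t"
  unfolding hypF_def assms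
  by (simp add: numeral_eq_Suc bval_def dv_def) algebra

lemma case1:
  fixes x0 L mu :: real
  assumes hx: "0 < 3 * x0" "3 * x0 < L" and mu: "0 < mu" and m: "mu < mu0 x0 L"
  defines "a \<equiv> x0 / (L + x0)"
  defines "\<alpha> \<equiv> sqrt (mu + a + 2 * sqrt a) / 2"
  defines "\<beta> \<equiv> sqrt (- mu - a + 2 * sqrt a) / 2"
  shows "general_solution_basis x0 L mu
        (\<lambda>t. cos (\<alpha> * t) * sinh (\<beta> * t)) (\<lambda>t. sin (\<alpha> * t) * cosh (\<beta> * t))
        (\<lambda>t. sin (\<alpha> * t) * sinh (\<beta> * t)) (\<lambda>t. cos (\<alpha> * t) * cosh (\<beta> * t))"
proof -
  note HF = H_facts[OF hx, folded a_def]
  define r where "r = sqrt a"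
  have a0: "0 < a" using HF(1) .
  have r0: "0 < r" using a0 unfolding r_def by simp
  have r2: "r^2 = a" using a0 unfolding r_def by simp
  have hm: "- mu - a + 2*r > 0" using m unfolding mu0_def a_def[symmetric] r_def[symmetric] by simp
  have al2: "\<alpha>^2 = (mu + a + 2*r)/4" unfolding \<alpha>_def r_def[symmetric] using mu a0 r0
    by (simp add: power_divide)
  have be2: "\<beta>^2 = (- mu - a + 2*r)/4" unfolding \<beta>_def r_def[symmetric] using hm
    by (simp add: power_divide)
  have al0: "0 < \<alpha>" unfolding \<alpha>_def r_def[symmetric] using mu a0 r0 by simp
  have be0: "0 < \<beta>" unfolding \<beta>_def r_def[symmetric] using hm by simp
  have A: "mu + a = 2 * (\<alpha>^2 - \<beta>^2)" using al2 be2 by simp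
  have "\<alpha>^2 + \<beta>^2 = r" using al2 be2 by simp
  hence B: "a = (\<alpha>^2 + \<beta>^2)^2" using r2 by simp
  define e1 where "e1 = (1::real, 0::real, 0::real, 0::real)"
  define e2 where "e2 = (0::real, 1::real, 0::real, 0::real)"
  define e3 where "e3 = (0::real, 0::real, 1::real, 0::real)"
  define e4 where "e4 = (0::real, 0::real, 0::real, 1::real)"
  have od: "\<And>v t. hypF \<alpha> \<beta> v 4 t = - (mu + x0 / (L + x0)) * hypF \<alpha> \<beta> v 2 t - x0 / (L + x0) * hypF \<alpha> \<beta> v 0 t"
    unfolding a_def[symmetric] by (rule hypF_ode[OF A B])
  have "general_solution_basis x0 L mu (hypF \<alpha> \<beta> e1 0) (hypF \<alpha> \<beta> e2 0) (hypF \<alpha> \<beta> e3 0) (hypF \<alpha> \<beta> e4 0)"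
  proof (rule main_generic[OF hx mu], (rule hypF_d od)+)
    fix c1 c2 c3 c4
    assume z: "\<And>j. j < 4 \<Longrightarrow> c1 * hypF \<alpha> \<beta> e1 j 0 + c2 * hypF \<alpha> \<beta> e2 j 0 + c3 * hypF \<alpha> \<beta> e3 j 0 + c4 * hypF \<alpha> \<beta> e4 j 0 = 0"
    have q0: "c4 = 0" using z[of 0] by (simp add: hypF_def bval_def dv_def e1_def e2_def e3_def e4_def)
    have q1: "\<beta> * c1 + \<alpha> * c2 = 0" using z[of 1] by (simp add: hypF_def bval_def dv_def e1_def e2_def e3_def e4_def mult.commute)
    have q2: "2 * \<alpha> * \<beta> * c3 + (\<beta>^2 - \<alpha>^2) * c4 = 0" using z[of 2]
      by (simp add: hypF_def bval_def dv_def e1_def e2_def e3_def e4_def numeral_eq_Suc algebra_simps power2_eq_square)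
    have q3: "(\<beta>^3 - 3*\<alpha>^2*\<beta>) * c1 + (3*\<alpha>*\<beta>^2 - \<alpha>^3) * c2 = 0" using z[of 3]
      by (simp add: hypF_def bval_def dv_def e1_def e2_def e3_def e4_def numeral_eq_Suc algebra_simps power2_eq_square power3_eq_cube)
    have c3: "c3 = 0" using q2 q0 al0 be0 by simp
    have c2e: "c2 = - \<beta> * c1 / \<alpha>" using q1 al0 by (simp add: field_simps)
    have "\<alpha> * ((\<beta>^3 - 3*\<alpha>^2*\<beta>) * c1 + (3*\<alpha>*\<beta>^2 - \<alpha>^3) * c2) = -2 * \<alpha> * \<beta> * (\<alpha>^2 + \<beta>^2) * c1"
      unfolding c2e using al0 by (simp add: field_simps power2_eq_square power3_eq_cube)
    hence "\<alpha> * \<beta> * (\<alpha>^2 + \<beta>^2) * c1 = 0" using q3 by simp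
    moreover have "\<alpha>^2 + \<beta>^2 > 0" using al0 by (simp add: add_pos_nonneg)
    ultimately have c1: "c1 = 0" using be0 al0 by simp
    show "c1 = 0 \<and> c2 = 0 \<and> c3 = 0 \<and> c4 = 0" using c1 c2e c3 q0 by simp
  qed
  moreover have "hypF \<alpha> \<beta> e1 0 = (\<lambda>t. cos (\<alpha> * t) * sinh (\<beta> * t))"
      "hypF \<alpha> \<beta> e2 0 = (\<lambda>t. sin (\<alpha> * t) * cosh (\<beta> * t))"
      "hypF \<alpha> \<beta> e3 0 = (\<lambda>t. sin (\<alpha> * t) * sinh (\<beta> * t))"
      "hypF \<alpha> \<beta> e4 0 = (\<lambda>t. cos (\<alpha> * t) * cosh (\<beta> * t))"
    by (rule ext, simp add: hypF_def bval_def e1_def e2_def e3_def e4_def)+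
  ultimately show ?thesis by simp
qed


theorem mainTheorem16:
  fixes x0 L mu :: real
  assumes "0 < 3 * x0" and "3 * x0 < L" and "0 < mu"
  defines "a \<equiv> x0 / (L + x0)"
  defines "\<alpha> \<equiv> sqrt (mu + a + 2 * sqrt a) / 2"
  defines "\<beta> \<equiv> sqrt (- mu - a + 2 * sqrt a) / 2"
  defines "\<gamma> \<equiv> sqrt (mu + a - 2 * sqrt a) / 2"
  shows
    "(mu < mu0 x0 L \<longrightarrow> general_solution_basis x0 L mu
        (\<lambda>t. cos (\<alpha> * t) * sinh (\<beta> * t)) (\<lambda>t. sin (\<alpha> * t) * cosh (\<beta> * t))
        (\<lambda>t. sin (\<alpha> * t) * sinh (\<beta> * t)) (\<lambda>t. cos (\<alpha> * t) * cosh (\<beta> * t)))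
     \<and> (mu = mu0 x0 L \<longrightarrow> general_solution_basis x0 L mu
        (\<lambda>t. sin (\<alpha> * t)) (\<lambda>t. cos (\<alpha> * t))
        (\<lambda>t. t * sin (\<alpha> * t)) (\<lambda>t. t * cos (\<alpha> * t)))
     \<and> (mu > mu0 x0 L \<longrightarrow> general_solution_basis x0 L mu
        (\<lambda>t. sin ((\<alpha> - \<gamma>) * t)) (\<lambda>t. sin ((\<alpha> + \<gamma>) * t))
        (\<lambda>t. cos ((\<alpha> - \<gamma>) * t)) (\<lambda>t. cos ((\<alpha> + \<gamma>) * t)))"
  proof (intro conjI impI)
  assume h: "mu < mu0 x0 L"
  show "general_solution_basis x0 L mu
        (\<lambda>t. cos (\<alpha> * t) * sinh (\<beta> * t)) (\<lambda>t. sin (\<alpha> * t) * cosh (\<beta> * t))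
        (\<lambda>t. sin (\<alpha> * t) * sinh (\<beta> * t)) (\<lambda>t. cos (\<alpha> * t) * cosh (\<beta> * t))"
    using case1[OF assms(1,2,3) h] unfolding \<alpha>_def \<beta>_def a_def .
next
  assume h: "mu = mu0 x0 L"
  show "general_solution_basis x0 L mu
        (\<lambda>t. sin (\<alpha> * t)) (\<lambda>t. cos (\<alpha> * t))
        (\<lambda>t. t * sin (\<alpha> * t)) (\<lambda>t. t * cos (\<alpha> * t))"
    using case2[OF assms(1,2,3) h] unfolding \<alpha>_def a_def .
next
  assume h: "mu > mu0 x0 L"
  show "general_solution_basis x0 L mu
        (\<lambda>t. sin ((\<alpha> - \<gamma>) * t)) (\<lambda>t. sin ((\<alpha> + \<gamma>) * t))
        (\<lambda>t. cos ((\<alpha> - \<gamma>) * t)) (\<lambda>t. cos ((\<alpha> + \<gamma>) * t))"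
    using case3[OF assms(1,2,3) h] unfolding \<alpha>_def \<gamma>_def a_def .
qed

end
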